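(* Let $f(t_1,t_2)=[t_1,t_2,t_{i_3},\ldots,t_{i_k}]$ be a left normed commutator with $i_j\in\{1,2\}$ (and $i_1=1$, $i_2=2$), with $\deg_{t_1}f=n$, $\deg_{t_2}f=m$, $n+m=k\ge 2$. Put $i=i_k$. Then $f(C_1,C_2)=(x_1'-x_1)^{n-1}(x_2'-x_2)^{m-1}A(k)$, where \[A(k)=\begin{pmatrix} F(k) & y_1(x_2'-x_2)-y_2(x_1'-x_1)\\ (-1)^k\big(y_2'(x_1'-x_1)-y_1'(x_2'-x_2)\big) & F(k)\end{pmatrix},\] \[F(k)=\frac{\big(y_1(x_2'-x_2)-y_2(x_1'-x_1)\big)y_i'+(-1)^k y_i\big(y_2'(x_1'-x_1)-y_1'(x_2'-x_2)\big)}{x_i'-x_i}.\]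
   Context: $K$ is an infinite field of characteristic different from 2. Let $X=\{x_1,x_2,x_1',x_2'\}$ and $Y=\{y_1,y_2,y_1',y_2'\}$, and let $K[X;Y]\cong K[X]\otimes_K E(Y)$ be the free supercommutative algebra: the $x$'s are even commuting variables, the $y$'s are odd pairwise anticommuting variables, and $E(Y)$ is the Grassmann algebra on the vector space with basis $Y$. The division defining $F(k)$ is performed in $K(X)\otimes_K E(Y)$, where $K(X)$ is the field of fractions of $K[X]$. Put $C_1=\begin{pmatrix} x_1&y_1\\ y_1'&x_1'\end{pmatrix}$, $C_2=\begin{pmatrix} x_2&y_2\\ y_2'&x_2'\end{pmatrix}\in M_2(K[X;Y])$. Commutators are $[a,b]=ab-ba$ and are left normed: $[a_1,\ldots,a_k]=[[a_1,\ldots,a_{k-1}],a_k]$. $t_1,t_2$ are free noncommuting variables and $f(C_1,C_2)$ denotes evaluation. *)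

theory Defs
  imports "HOL-Computational_Algebra.Polynomial" "HOL-Computational_Algebra.Fraction_Field"
begin

text \<open>K[X] with X = {x1,x2,x1',x2'} is modelled as the iterated polynomial ring
  'k poly poly poly poly, and K(X) as its fraction field.  Variable indices:
  0 = x1, 1 = x2, 2 = x1', 3 = x2'.\<close>

type_synonym 'k ratfun = "'k poly poly poly poly fract"

definition xvar :: "nat \<Rightarrow> 'k::field ratfun" where
  "xvar j = Fract (if j = 0 then [:0, 1:]
                   else if j = 1 then [:[:0, 1:]:]
                   else if j = 2 then [:[:[:0, 1:]:]:]
                   else [:[:[:[:0, 1:]:]:]:]) 1"

text \<open>Grassmann algebra with coefficients in a commutative ring 'r: an element is
  the family of its coefficients w.r.t. the monomials e_S (S a finite set of
  generator indices, listed increasingly).  Odd generators: 0 = y1, 1 = y2,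
  2 = y1', 3 = y2'.\<close>

type_synonym 'r grass = "nat set \<Rightarrow> 'r"

definition gsgn :: "nat set \<Rightarrow> nat set \<Rightarrow> 'r::comm_ring_1" where
  "gsgn T U = (-1) ^ card {(t, u). t \<in> T \<and> u \<in> U \<and> u < t}"

definition gmul :: "'r::comm_ring_1 grass \<Rightarrow> 'r grass \<Rightarrow> 'r grass" where
  "gmul a b = (\<lambda>S. \<Sum>T\<in>Pow S. gsgn T (S - T) * a T * b (S - T))"

definition gadd :: "'r::comm_ring_1 grass \<Rightarrow> 'r grass \<Rightarrow> 'r grass" where
  "gadd a b = (\<lambda>S. a S + b S)"

definition gsub :: "'r::comm_ring_1 grass \<Rightarrow> 'r grass \<Rightarrow> 'r grass" where
  "gsub a b = (\<lambda>S. a S - b S)"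

definition gscale :: "'r::comm_ring_1 \<Rightarrow> 'r grass \<Rightarrow> 'r grass" where
  "gscale c a = (\<lambda>S. c * a S)"

definition gconst :: "'r::comm_ring_1 \<Rightarrow> 'r grass" where
  "gconst c = (\<lambda>S. if S = {} then c else 0)"

definition ygen :: "nat \<Rightarrow> 'r::comm_ring_1 grass" where
  "ygen j = (\<lambda>S. if S = {j} then 1 else 0)"

text \<open>2x2 matrices over the Grassmann algebra, indexed by bool (False = first row/col).\<close>

type_synonym 'r gmat = "bool \<Rightarrow> bool \<Rightarrow> 'r grass"

definition mk2 :: "'r grass \<Rightarrow> 'r grass \<Rightarrow> 'r grass \<Rightarrow> 'r grass \<Rightarrow> 'r gmat" where
  "mk2 a b c d = (\<lambda>i j. if \<not> i then (if \<not> j then a else b) else (if \<not> j then c else d))"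

definition mmul :: "'r::comm_ring_1 gmat \<Rightarrow> 'r gmat \<Rightarrow> 'r gmat" where
  "mmul A B = (\<lambda>i j. gadd (gmul (A i False) (B False j)) (gmul (A i True) (B True j)))"

definition msub :: "'r::comm_ring_1 gmat \<Rightarrow> 'r gmat \<Rightarrow> 'r gmat" where
  "msub A B = (\<lambda>i j. gsub (A i j) (B i j))"

definition mscale :: "'r::comm_ring_1 \<Rightarrow> 'r gmat \<Rightarrow> 'r gmat" where
  "mscale c A = (\<lambda>i j. gscale c (A i j))"

definition mcomm :: "'r::comm_ring_1 gmat \<Rightarrow> 'r gmat \<Rightarrow> 'r gmat" where
  "mcomm A B = msub (mmul A B) (mmul B A)"

definition lcomm :: "(nat \<Rightarrow> 'r::comm_ring_1 gmat) \<Rightarrow> nat list \<Rightarrow> 'r gmat" where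
  "lcomm M ws = foldl (\<lambda>acc w. mcomm acc (M w)) (M (hd ws)) (tl ws)"

definition Cmat :: "nat \<Rightarrow> ('k::field ratfun) gmat" where
  "Cmat j = (if j = 1
     then mk2 (gconst (xvar 0)) (ygen 0) (ygen 2) (gconst (xvar 2))
     else mk2 (gconst (xvar 1)) (ygen 1) (ygen 3) (gconst (xvar 3)))"

end

theory Submission
  imports Defs
begin

definition fin0 :: "'r::comm_ring_1 grass \<Rightarrow> bool" where
  "fin0 a \<longleftrightarrow> (\<forall>S. infinite S \<longrightarrow> a S = 0)"

lemma gmul_inf: "infinite S \<Longrightarrow> gmul a b S = 0"
  by (simp add: gmul_def)

lemma fin0_gmul[simp]: "fin0 (gmul a b)"
  by (simp add: fin0_def gmul_inf)
lemma fin0_ygen[simp]: "fin0 (ygen j)"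
  by (auto simp: fin0_def ygen_def)
lemma fin0_gadd[simp]: "fin0 a \<Longrightarrow> fin0 b \<Longrightarrow> fin0 (gadd a b)"
  by (simp add: fin0_def gadd_def)
lemma fin0_gsub[simp]: "fin0 a \<Longrightarrow> fin0 b \<Longrightarrow> fin0 (gsub a b)"
  by (simp add: fin0_def gsub_def)
lemma fin0_gscale[simp]: "fin0 a \<Longrightarrow> fin0 (gscale c a)"
  by (simp add: fin0_def gscale_def)
lemma fin0_gconst[simp]: "fin0 (gconst x)"
  by (simp add: fin0_def gconst_def)
lemma fin0_zero[simp]: "fin0 (\<lambda>S. 0)"
  by (simp add: fin0_def)

lemma gmul_gadd_left[simp]: "gmul (gadd a b) c = gadd (gmul a c) (gmul b c)"
  by (rule ext) (simp add: gmul_def gadd_def algebra_simps sum.distrib)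
lemma gmul_gadd_right[simp]: "gmul c (gadd a b) = gadd (gmul c a) (gmul c b)"
  by (rule ext) (simp add: gmul_def gadd_def algebra_simps sum.distrib)
lemma gmul_gsub_left[simp]: "gmul (gsub a b) c = gsub (gmul a c) (gmul b c)"
  by (rule ext) (simp add: gmul_def gsub_def algebra_simps sum_subtractf)
lemma gmul_gsub_right[simp]: "gmul c (gsub a b) = gsub (gmul c a) (gmul c b)"
  by (rule ext) (simp add: gmul_def gsub_def algebra_simps sum_subtractf)
lemma gmul_gscale_left[simp]: "gmul (gscale x a) c = gscale x (gmul a c)"
  by (rule ext) (simp add: gmul_def gscale_def algebra_simps sum_distrib_left)
lemma gmul_gscale_right[simp]: "gmul c (gscale x a) = gscale x (gmul c a)"
  by (rule ext) (simp add: gmul_def gscale_def algebra_simps sum_distrib_left)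
lemma gmul_zero_left[simp]: "gmul (\<lambda>S. 0) c = (\<lambda>S. 0)"
  by (rule ext) (simp add: gmul_def)
lemma gmul_zero_right[simp]: "gmul c (\<lambda>S. 0) = (\<lambda>S. 0)"
  by (rule ext) (simp add: gmul_def)

lemma gsgn_empty1: "gsgn {} U = 1"
  by (simp add: gsgn_def)
lemma gsgn_empty2: "gsgn T {} = 1"
  by (simp add: gsgn_def)

lemma gmul_gconst_right[simp]:
  assumes "fin0 a" shows "gmul a (gconst x) = gscale x a"
proof (rule ext)
  fix S :: "nat set"
  show "gmul a (gconst x) S = gscale x a S"
  proof (cases "finite S")
    case True
    have "gmul a (gconst x) S = (\<Sum>T\<in>Pow S. if T = S then gsgn S {} * a S * x else 0)"
      unfolding gmul_def gconst_def
      by (rule sum.cong) auto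
    also have "\<dots> = gsgn S {} * a S * x" using True by simp
    finally show ?thesis by (simp add: gsgn_empty2 gscale_def)
  next
    case False
    then show ?thesis using assms by (simp add: gmul_inf fin0_def gscale_def)
  qed
qed

lemma gmul_gconst_left[simp]:
  assumes "fin0 a" shows "gmul (gconst x) a = gscale x a"
proof (rule ext)
  fix S :: "nat set"
  show "gmul (gconst x) a S = gscale x a S"
  proof (cases "finite S")
    case True
    have "gmul (gconst x) a S = (\<Sum>T\<in>Pow S. if T = {} then gsgn {} S * x * a S else 0)"
      unfolding gmul_def gconst_def
      by (rule sum.cong) auto
    also have "\<dots> = gsgn {} S * x * a S" using True by simp
    finally show ?thesis by (simp add: gsgn_empty1 gscale_def)
  next
    case False
    then show ?thesis using assms by (simp add: gmul_inf fin0_def gscale_def)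
  qed
qed

lemma gsgn_right: "gsgn T {c} = (-1) ^ card {t\<in>T. c < t}"
proof -
  have "{(t, u). t \<in> T \<and> u \<in> {c} \<and> u < t} = (\<lambda>t. (t, c)) ` {t\<in>T. c < t}" by auto
  moreover have "inj_on (\<lambda>t. (t, c)) {t\<in>T. c < t}" by (auto simp: inj_on_def)
  ultimately show ?thesis by (simp add: gsgn_def card_image)
qed

lemma gsgn_left: "gsgn {c} U = (-1) ^ card {u\<in>U. u < c}"
proof -
  have "{(t, u). t \<in> {c} \<and> u \<in> U \<and> u < t} = Pair c ` {u\<in>U. u < c}" by auto
  moreover have "inj_on (Pair c) {u\<in>U. u < c}" by (auto simp: inj_on_def)
  ultimately show ?thesis by (simp add: gsgn_def card_image)
qed

lemma card2: "a \<noteq> b \<Longrightarrow> card {t\<in>{a,b}. P t} = (if P a then 1 else 0) + (if P b then 1 else 0)"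
proof -
  assume ab: "a \<noteq> b"
  show ?thesis
  proof (cases "P a"; cases "P b")
    assume "P a" "P b" then have "{t\<in>{a,b}. P t} = {a,b}" by auto
    then show ?thesis using ab \<open>P a\<close> \<open>P b\<close> by simp
  next
    assume "P a" "\<not> P b" then have "{t\<in>{a,b}. P t} = {a}" by auto
    then show ?thesis using ab \<open>P a\<close> \<open>\<not> P b\<close> by simp
  next
    assume "\<not> P a" "P b" then have "{t\<in>{a,b}. P t} = {b}" by auto
    then show ?thesis using ab \<open>\<not> P a\<close> \<open>P b\<close> by simp
  next
    assume "\<not> P a" "\<not> P b" then have "{t\<in>{a,b}. P t} = {}" by auto
    then show ?thesis using ab \<open>\<not> P a\<close> \<open>\<not> P b\<close> by simp
  qed
qed

lemma card1: "card {t\<in>{a}. P t} = (if P a then 1 else 0)"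
proof (cases "P a")
  case True
  then have "{t\<in>{a}. P t} = {a}" by auto
  then show ?thesis using True by simp
next
  case False
  then have "{t\<in>{a}. P t} = {}" by auto
  then show ?thesis using False by simp
qed

lemma gmul_yy:
  "gmul (ygen a) (ygen b) = (\<lambda>S. if a \<noteq> b \<and> S = {a, b} then (if b < a then -1 else 1) else (0::'r::comm_ring_1))"
proof (rule ext)
  fix S :: "nat set"
  show "gmul (ygen a) (ygen b) S = (if a \<noteq> b \<and> S = {a, b} then (if b < a then -1 else 1) else (0::'r))"
  proof (cases "finite S")
    case True
    have "gmul (ygen a) (ygen b) S = (\<Sum>T\<in>Pow S. if T = {a} then (if S - {a} = {b} then gsgn {a} {b} else 0) else (0::'r))"
      unfolding gmul_def ygen_def
      by (rule sum.cong) auto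
    also have "\<dots> = (if a \<in> S \<and> S - {a} = {b} then gsgn {a} {b} else 0)" using True by simp
    also have "\<dots> = (if a \<noteq> b \<and> S = {a, b} then (if b < a then -1 else 1) else (0::'r))"
    proof -
      have c1: "(a \<in> S \<and> S - {a} = {b}) \<longleftrightarrow> (a \<noteq> b \<and> S = {a, b})" by blast
      have c2: "gsgn {a} {b} = (if b < a then -1 else (1::'r))"
        unfolding gsgn_right card1 by simp
      show ?thesis unfolding c1 c2 ..
    qed
    finally show ?thesis .
  next
    case False
    then show ?thesis by (auto simp: gmul_inf)
  qed
qed

lemma gmul_ygen_right:
  "gmul X (ygen c) S = (if finite S \<and> c \<in> S then gsgn (S - {c}) {c} * X (S - {c}) else 0)"
proof (cases "finite S")
  case True
  have eq: "T \<subseteq> S \<Longrightarrow> (S - T = {c}) \<longleftrightarrow> (T = S - {c} \<and> c \<in> S)" for T by auto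
  have dd: "c \<in> S \<Longrightarrow> S - (S - {c}) = {c}" by auto
  have "gmul X (ygen c) S = (\<Sum>T\<in>Pow S. if T = S - {c} then (if c \<in> S then gsgn (S - {c}) {c} * X (S - {c}) else 0) else 0)"
    unfolding gmul_def ygen_def
    by (rule sum.cong) (auto simp: eq dd)
  also have "\<dots> = (if c \<in> S then gsgn (S - {c}) {c} * X (S - {c}) else 0)"
    using True by simp
  finally show ?thesis using True by simp
next
  case False
  then show ?thesis by (simp add: gmul_inf)
qed

lemma gmul_ygen_left:
  "gmul (ygen c) X S = (if finite S \<and> c \<in> S then gsgn {c} (S - {c}) * X (S - {c}) else 0)"
proof (cases "finite S")
  case True
  have "gmul (ygen c) X S = (\<Sum>T\<in>Pow S. if T = {c} then (if c \<in> S then gsgn {c} (S - {c}) * X (S - {c}) else 0) else 0)"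
    unfolding gmul_def ygen_def
    by (rule sum.cong) auto
  also have "\<dots> = (if c \<in> S then gsgn {c} (S - {c}) * X (S - {c}) else 0)" using True by simp
  finally show ?thesis using True by simp
next
  case False
  then show ?thesis by (simp add: gmul_inf)
qed

lemma gsgn_swap3:
  assumes "a \<noteq> b" "c \<noteq> a" "c \<noteq> b"
  shows "gsgn {a, b} {c} = (gsgn {c} {a, b} :: 'r::comm_ring_1)"
proof -
  have l: "{u\<in>{a,b}. u < c} = {u\<in>{a,b}. \<not> c < u}" using assms by auto
  show ?thesis
    unfolding gsgn_right gsgn_left l card2[OF assms(1)] using assms
    by (cases "c < a"; cases "c < b") (simp_all add: card2)
qed

lemma gmul_yy_comm[simp]:
  "gmul (ygen c) (gmul (ygen a) (ygen b)) = (gmul (gmul (ygen a) (ygen b)) (ygen c) :: 'r::comm_ring_1 grass)"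
proof (rule ext)
  fix S :: "nat set"
  show "gmul (ygen c) (gmul (ygen a) (ygen b)) S = (gmul (gmul (ygen a) (ygen b)) (ygen c) S :: 'r)"
  proof (cases "finite S \<and> c \<in> S \<and> a \<noteq> b \<and> S - {c} = {a, b}")
    case True
    then have "c \<noteq> a" "c \<noteq> b" by auto
    then have "gsgn {a, b} {c} = (gsgn {c} {a, b} :: 'r)" using True gsgn_swap3 by blast
    then show ?thesis using True by (simp add: gmul_ygen_left gmul_ygen_right gmul_yy)
  next
    case False
    then show ?thesis by (auto simp add: gmul_ygen_left gmul_ygen_right gmul_yy)
  qed
qed

lemma gmul_yy_anti[simp]:
  "b < a \<Longrightarrow> gmul (ygen a) (ygen b) = gscale (-1) (gmul (ygen b) (ygen a) :: 'r::comm_ring_1 grass)"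
  by (rule ext) (auto simp: gmul_yy gscale_def insert_commute)

lemma gmul_yy_sq[simp]: "gmul (ygen a) (ygen a) = (\<lambda>S. 0::'r::comm_ring_1)"
  by (simp add: gmul_yy)


lemma xvar_diff_nz:
  "xvar 2 - xvar 0 \<noteq> (0::'k::field ratfun)" "xvar 3 - xvar 1 \<noteq> (0::'k::field ratfun)"
  by (simp_all add: xvar_def eq_fract Zero_fract_def)

definition xI :: "nat \<Rightarrow> 'k::field ratfun" where "xI i = (if i = 1 then xvar 0 else xvar 1)"
definition xI' :: "nat \<Rightarrow> 'k::field ratfun" where "xI' i = (if i = 1 then xvar 2 else xvar 3)"
definition yI :: "nat \<Rightarrow> 'k::field ratfun grass" where "yI i = (if i = 1 then ygen 0 else ygen 1)"
definition yI' :: "nat \<Rightarrow> 'k::field ratfun grass" where "yI' i = (if i = 1 then ygen 2 else ygen 3)"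

definition Bm :: "'k::field ratfun grass" where
  "Bm = gsub (gmul (ygen 0) (gconst (xvar 3 - xvar 1))) (gmul (ygen 1) (gconst (xvar 2 - xvar 0)))"
definition Dm :: "'k::field ratfun grass" where
  "Dm = gsub (gmul (ygen 3) (gconst (xvar 2 - xvar 0))) (gmul (ygen 2) (gconst (xvar 3 - xvar 1)))"
definition Fm :: "'k::field ratfun \<Rightarrow> nat \<Rightarrow> 'k ratfun grass" where
  "Fm s i = gscale (inverse (xI' i - xI i)) (gadd (gmul Bm (yI' i)) (gscale s (gmul (yI i) Dm)))"
definition Am :: "'k::field ratfun \<Rightarrow> nat \<Rightarrow> 'k ratfun gmat" where
  "Am s i = mk2 (Fm s i) Bm (gscale s Dm) (Fm s i)"

lemma gmul_anti_pt: "gmul (ygen a) (ygen b) S = - (gmul (ygen b) (ygen a) S :: 'r::comm_ring_1)"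
  by (auto simp: gmul_yy insert_commute)

lemma fin0_Bm[simp]: "fin0 Bm" by (simp add: Bm_def)
lemma fin0_Dm[simp]: "fin0 Dm" by (simp add: Dm_def)
lemma fin0_Fm[simp]: "fin0 (Fm s i)" by (simp add: Fm_def)
lemma fin0_yI[simp]: "fin0 (yI i)" "fin0 (yI' i)" by (simp_all add: yI_def yI'_def)

lemma Fm_comm_gen: "gmul (Fm s i) (ygen c) = gmul (ygen c) (Fm s i)"
  unfolding Fm_def Bm_def Dm_def yI_def yI'_def by simp

lemma Fm_comm[simp]: "gmul (Fm s i) (yI j) = gmul (yI j) (Fm s i)"
  "gmul (Fm s i) (yI' j) = gmul (yI' j) (Fm s i)"
  by (simp_all add: yI_def yI'_def Fm_comm_gen)

lemma Dm_anti_gen: "gmul Dm (ygen c) = gscale (-1) (gmul (ygen c) Dm)"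
  unfolding Dm_def
  apply simp
  apply (rule ext)
  apply (simp add: gsub_def gscale_def gmul_anti_pt[of 3 c] gmul_anti_pt[of 2 c] algebra_simps)
  done

lemma Bm_anti_gen: "gmul (ygen c) Bm = gscale (-1) (gmul Bm (ygen c))"
  unfolding Bm_def
  apply simp
  apply (rule ext)
  apply (simp add: gsub_def gscale_def gmul_anti_pt[of c 0] gmul_anti_pt[of c 1] gmul_anti_pt[of c "Suc 0"] algebra_simps)
  done

lemma Dm_anti[simp]: "gmul Dm (yI j) = gscale (-1) (gmul (yI j) Dm)"
  by (simp add: yI_def Dm_anti_gen)
lemma Bm_anti[simp]: "gmul (yI' j) Bm = gscale (-1) (gmul Bm (yI' j))"
  by (simp add: yI'_def Bm_anti_gen)

lemma Cmat_eq: "j = 1 \<or> j = 2 \<Longrightarrow> Cmat j = mk2 (gconst (xI j)) (yI j) (yI' j) (gconst (xI' j))"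
  by (auto simp: Cmat_def xI_def xI'_def yI_def yI'_def)

lemma xI_nz: "j = 1 \<or> j = 2 \<Longrightarrow> xI' j - xI j \<noteq> (0::'k::field ratfun)"
  using xvar_diff_nz by (auto simp: xI_def xI'_def)

lemma step:
  fixes c :: "'k::field ratfun"
  assumes "j = 1 \<or> j = 2" "i = 1 \<or> i = 2"
  shows "mcomm (mscale c (Am s i)) (Cmat j) = mscale (c * (xI' j - xI j)) (Am (-s) j)"
proof -
  have nz: "xI' j - xI j \<noteq> (0::'k ratfun)" using xI_nz assms(1) by blast
  have inv: "(xI' j - xI j) * inverse (xI' j - xI j) = (1::'k ratfun)" using nz by simp
  show ?thesis
  apply (intro ext)
  subgoal for p q S
  apply (cases p; cases q; simp add: mcomm_def msub_def mmul_def mscale_def mk2_def Am_def Cmat_eq[OF assms(1)])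
  apply (simp_all add: gadd_def gsub_def gscale_def Fm_def)
  using inv by algebra+
  done
qed

lemma gscale_gconst_comm: "gscale x (gconst y) = gscale y (gconst (x::'r::comm_ring_1))"
  by (rule ext) (simp add: gscale_def gconst_def)

lemma base:
  "mcomm (Cmat 1) (Cmat 2) = mscale (1::'k::field ratfun) (Am 1 2)"
proof -
  have nz: "xvar 2 - xvar 0 \<noteq> (0::'k ratfun)" "xvar 3 - xvar 1 \<noteq> (0::'k ratfun)"
    by (rule xvar_diff_nz)+
  have inv1: "(xvar 2 - xvar 0) * inverse (xvar 2 - xvar 0) = (1::'k ratfun)" using nz by simp
  have inv2: "(xvar 3 - xvar 1) * inverse (xvar 3 - xvar 1) = (1::'k ratfun)" using nz by simp
  note inv = inv1 inv2[unfolded One_nat_def]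
  show ?thesis
  apply (intro ext)
  subgoal for p q S
  apply (cases p; cases q; simp add: mcomm_def msub_def mmul_def mscale_def mk2_def Am_def Fm_def Bm_def Dm_def
         xI_def xI'_def yI_def yI'_def Cmat_def)
  apply (simp_all add: gscale_gconst_comm)
  apply (simp_all add: gadd_def gsub_def gscale_def One_nat_def)
  using inv by algebra+
  done
qed

lemma iter:
  "set rest \<subseteq> {1,2} \<Longrightarrow>
   foldl (\<lambda>acc w. mcomm acc (Cmat w)) (mcomm (Cmat 1) (Cmat 2)) rest =
   mscale ((xvar 2 - xvar 0) ^ length (filter (\<lambda>w. w = 1) rest) *
           (xvar 3 - xvar 1) ^ length (filter (\<lambda>w. w = 2) rest))
          (Am ((-1) ^ (length rest + 2)) (last (2 # rest)) :: 'k::field ratfun gmat)"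
proof (induction rest rule: rev_induct)
  case Nil
  then show ?case using base by (simp add: One_nat_def)
next
  case (snoc j rest)
  then have IH: "foldl (\<lambda>acc w. mcomm acc (Cmat w)) (mcomm (Cmat 1) (Cmat 2)) rest =
   mscale ((xvar 2 - xvar 0) ^ length (filter (\<lambda>w. w = 1) rest) *
           (xvar 3 - xvar 1) ^ length (filter (\<lambda>w. w = 2) rest))
          (Am ((-1) ^ (length rest + 2)) (last (2 # rest)) :: 'k::field ratfun gmat)" by simp
  have j: "j = 1 \<or> j = 2" using snoc.prems by auto
  have i: "last (2 # rest) = 1 \<or> last (2 # rest) = 2"
  proof (cases "rest = []")
    case False
    then have "last rest \<in> set rest" by simp
    moreover have "set rest \<subseteq> {1,2}" using snoc.prems by simp
    ultimately have "last rest \<in> {1,2}" by blast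
    then show ?thesis using False by simp
  qed simp
  show ?case
    unfolding foldl_append foldl_Cons foldl_Nil IH step[OF j i]
    using j by (auto simp: xI_def xI'_def mult_ac)
qed

theorem lemma6:
  fixes ws :: "nat list" and n m k i :: nat
  assumes Kinf: "infinite (UNIV :: 'k::field set)"
    and char2: "(2::'k) \<noteq> 0"
    and len: "length ws = k" and k2: "k \<ge> 2"
    and w1: "ws ! 0 = 1" and w2: "ws ! 1 = 2"
    and wset: "set ws \<subseteq> {1, 2}"
    and ndef: "n = length (filter (\<lambda>w. w = 1) ws)"
    and mdef: "m = length (filter (\<lambda>w. w = 2) ws)"
    and idef: "i = last ws"
  shows
    "let x1 = (xvar 0 :: 'k ratfun); x2 = xvar 1; x1' = xvar 2; x2' = xvar 3;
         y1 = (ygen 0 :: 'k ratfun grass); y2 = ygen 1; y1' = ygen 2; y2' = ygen 3;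
         xi = (if i = 1 then x1 else x2); xi' = (if i = 1 then x1' else x2');
         yi = (if i = 1 then y1 else y2); yi' = (if i = 1 then y1' else y2');
         s = (-1) ^ k;
         B = gsub (gmul y1 (gconst (x2' - x2))) (gmul y2 (gconst (x1' - x1)));
         D = gsub (gmul y2' (gconst (x1' - x1))) (gmul y1' (gconst (x2' - x2)));
         F = gscale (inverse (xi' - xi)) (gadd (gmul B yi') (gscale s (gmul yi D)));
         A = mk2 F B (gscale s D) F
     in lcomm Cmat ws = mscale ((x1' - x1) ^ (n - 1) * (x2' - x2) ^ (m - 1)) A"
proof -
  define rest where "rest = drop 2 ws"
  have ws: "ws = 1 # 2 # rest"
  proof -
    obtain a b r where "ws = a # b # r"
      using len k2 by (cases ws; cases "tl ws") auto
    then show ?thesis using w1 w2 unfolding rest_def by simp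
  qed
  have rs: "set rest \<subseteq> {1,2}" using wset ws by auto
  have main: "lcomm Cmat ws = mscale ((xvar 2 - xvar 0) ^ (n - 1) * (xvar 3 - xvar 1) ^ (m - 1))
      (Am ((-1) ^ k) i :: 'k ratfun gmat)"
    using iter[OF rs] unfolding lcomm_def ws ndef mdef idef len[symmetric] by (simp add: ws)
  show ?thesis
    unfolding Let_def main Am_def Fm_def Bm_def Dm_def xI_def xI'_def yI_def yI'_def by simp
qed

end
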